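(* Let $a,b\in\mathbb{C}$ and let $m,n\ge 0$ be integers. Define $S_n(a,b,m)=\sum_{k=0}^n\binom{n}{k}a^kb^{n-k}H_k(m)$. Then $$S_n(a,b,m)=\sum_{j=0}^m\binom{m}{j}\sum_{k=0}^n H_k(j)\,(a+b)^k\,\frac{(m-j)!}{(n-k)!}\,(-1)^{n-k}\,b^{n-k}\,s(n-k,m-j).$$
   Context: For integers $m\ge 1$, $n\ge 0$, the multiple harmonic-like numbers are $H_n(m)=\sum_{1\le k_1+k_2+\cdots+k_m\le n}\frac{1}{k_1k_2\cdots k_m}$ (sum over positive integers $k_1,\dots,k_m$), with $H_n(0)=1$ for $n\ge 0$ and $H_0(m)=0$ for $m\ge1$. Equivalently, $\sum_{n\ge0}H_n(m)z^n=\frac{(-\ln(1-z))^m}{1-z}$. The (signed) Stirling numbers of the first kind $s(n,k)$ are defined by $\sum_{n\ge k}s(n,k)\frac{z^n}{n!}=\frac{\ln^k(1+z)}{k!}$, with $s(n,k)=0$ for $n<k$. Convention $0^0=1$. *)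

theory Defs
  imports "HOL-Analysis.Analysis" "HOL-Combinatorics.Stirling" "HOL-Library.FuncSet"
begin

text \<open>Tuples are represented as extensional functions on {0..<m} with values in {1..n}
  (each k_i <= n is forced by positivity and the sum bound). For m = 0 the only tuple is
  the empty one, giving H_n(0) = 1; for m >= 1 and n = 0 the sum is empty, giving 0.\<close>
definition H :: "nat \<Rightarrow> nat \<Rightarrow> complex" where
  "H n m = (\<Sum>k \<in> {k \<in> {0..<m} \<rightarrow>\<^sub>E {1..n}. (\<Sum>i<m. k i) \<le> n}.
              1 / (\<Prod>i<m. of_nat (k i)))"

text \<open>Signed Stirling numbers of the first kind, s(n,k) = (-1)^(n-k) [n k], where
  the library's stirling n k is the unsigned Stirling number of the first kind.\<close>
definition s1 :: "nat \<Rightarrow> nat \<Rightarrow> complex" where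
  "s1 n k = (-1) ^ (n - k) * of_nat (stirling n k)"

definition S :: "nat \<Rightarrow> complex \<Rightarrow> complex \<Rightarrow> nat \<Rightarrow> complex" where
  "S n a b m = (\<Sum>k=0..n. of_nat (n choose k) * a ^ k * b ^ (n - k) * H k m)"

end

theory Submission imports Defs "HOL-Computational_Algebra.Formal_Power_Series" begin

no_notation vec_nth (infixl \<open>$\<close> 90)
notation fps_nth (infixl \<open>$\<close> 75)

definition LL :: "complex fps" where "LL = Abs_fps (\<lambda>n. if n = 0 then 0 else 1 / of_nat n)"
definition EE :: "complex \<Rightarrow> complex fps" where "EE c = Abs_fps (\<lambda>n. c ^ n)"
abbreviation KK :: "complex \<Rightarrow> complex fps" where "KK c \<equiv> fps_const c * fps_X"

lemma EE_nth [simp]: "EE c $ n = c ^ n" by (simp add: EE_def)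

lemma EE_inv: "EE c * (1 - KK c) = 1"
proof -
  have "EE c * (1 - KK c) = EE c - fps_const c * (fps_X * EE c)" by (simp add: algebra_simps)
  also have "\<dots> = 1" by (auto simp: fps_eq_iff) (metis Suc_pred power_Suc)
  finally show ?thesis .
qed

lemma hockey: "(\<Sum>j=0..k. ((j + i) choose i)) = (k + Suc i) choose Suc i"
  by (induct k) auto

lemma EE_pow: "(EE c ^ Suc i) $ k = of_nat ((k + i) choose i) * c ^ k"
proof (induction i arbitrary: k)
  case 0 then show ?case by (simp add: EE_def)
next
  case (Suc i)
  have "(EE c ^ Suc (Suc i)) $ k = (EE c * EE c ^ Suc i) $ k" by simp
  also have "\<dots> = (\<Sum>j=0..k. c ^ j * (of_nat ((k - j + i) choose i) * c ^ (k - j)))"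
    by (simp only: power_Suc[of "EE c" "Suc i"] fps_mult_nth EE_nth Suc.IH)
  also have "\<dots> = (\<Sum>j=0..k. of_nat ((k - j + i) choose i) * c ^ k)"
    by (intro sum.cong refl) (simp add: power_add[symmetric])
  also have "\<dots> = of_nat (\<Sum>j=0..k. ((k - j + i) choose i)) * c ^ k"
    by (simp add: sum_distrib_right)
  also have "(\<Sum>j=0..k. ((k - j + i) choose i)) = (\<Sum>j=0..k. ((j + i) choose i))"
    by (rule sum.reindex_bij_witness[where i="\<lambda>j. k - j" and j="\<lambda>j. k - j"]) auto
  also have "\<dots> = (k + Suc i) choose Suc i"
    by (rule hockey)
  finally show ?case by simp
qed

lemma compose_K: "(f oo KK c) $ n = c ^ n * f $ n"
  by (simp add: fps_compose_linear)

lemma LL_deriv: "fps_deriv LL = EE 1"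
  by (simp add: fps_eq_iff LL_def EE_def del: of_nat_Suc)

lemma LL_0 [simp]: "LL $ 0 = 0" by (simp add: LL_def)

lemma LL_pow_rec:
  "of_nat (Suc i) * (LL ^ Suc r) $ Suc i - of_nat i * (LL ^ Suc r) $ i = of_nat (Suc r) * (LL ^ r) $ i"
proof -
  define F where "F = LL ^ Suc r"
  have "fps_deriv F = fps_const (of_nat (Suc r)) * EE 1 * LL ^ r"
    unfolding F_def fps_deriv_power LL_deriv by simp
  hence "fps_deriv F * (1 - KK 1) = fps_const (of_nat (Suc r)) * LL ^ r * (EE 1 * (1 - KK 1))"
    by (simp add: algebra_simps)
  hence "fps_deriv F - fps_X * fps_deriv F = fps_const (of_nat (Suc r)) * LL ^ r"
    by (simp only: EE_inv) (simp add: algebra_simps)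
  hence "(fps_deriv F - fps_X * fps_deriv F) $ i = (fps_const (of_nat (Suc r)) * LL ^ r) $ i" by simp
  moreover have "(fps_X * fps_deriv F) $ i = of_nat i * F $ i"
    by (cases i) (simp_all add: algebra_simps)
  ultimately have "of_nat (Suc i) * F $ Suc i - of_nat i * F $ i = of_nat (Suc r) * (LL ^ r) $ i"
    by (simp add: algebra_simps)
  then show ?thesis unfolding F_def .
qed

lemma LL_pow: "(LL ^ r) $ i = fact r * of_nat (stirling i r) / fact i"
proof (induction r arbitrary: i)
  case 0 then show ?case by (cases i) simp_all
next
  case (Suc r)
  note outer = Suc.IH
  show ?case
  proof (induction i)
    case 0 then show ?case by simp
  next
    case (Suc i)
    have "of_nat (Suc i) * (LL ^ Suc r) $ Suc i = of_nat i * (LL ^ Suc r) $ i + of_nat (Suc r) * (LL ^ r) $ i"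
      using LL_pow_rec[of i r] by (simp add: algebra_simps del: power_Suc)
    also have "\<dots> = of_nat i * (fact (Suc r) * of_nat (stirling i (Suc r)) / fact i)
        + of_nat (Suc r) * (fact r * of_nat (stirling i r) / fact i)"
      using Suc.IH outer[of i] by (simp del: power_Suc)
    also have "\<dots> = fact (Suc r) * of_nat (stirling (Suc i) (Suc r)) / fact i"
      by (simp add: field_simps)
    finally show ?case by (simp add: field_simps del: of_nat_Suc power_Suc)
  qed
qed

definition TT :: "nat \<Rightarrow> nat \<Rightarrow> (nat \<Rightarrow> nat) set" where
  "TT n m = {k \<in> {0..<m} \<rightarrow>\<^sub>E {1..n}. (\<Sum>i<m. k i) \<le> n}"

lemma H_TT: "H n m = (\<Sum>k\<in>TT n m. 1 / (\<Prod>i<m. of_nat (k i)))"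
  by (simp add: H_def TT_def)

lemma finite_TT: "finite (TT n m)"
  unfolding TT_def by (rule finite_subset[OF _ finite_PiE[of "{0..<m}" "\<lambda>_. {1..n}"]]) auto

lemma TT_bij: "bij_betw (\<lambda>(j, k). k(m := j)) (SIGMA j:{1..n}. TT (n - j) m) (TT n (Suc m))"
proof (rule bij_betw_byWitness[where f' = "\<lambda>k. (k m, restrict k {0..<m})"])
  show "\<forall>a\<in>(SIGMA j:{1..n}. TT (n - j) m). (\<lambda>k. (k m, restrict k {0..<m})) ((\<lambda>(j, k). k(m := j)) a) = a"
  proof
    fix x assume "x \<in> (SIGMA j:{1..n}. TT (n - j) m)"
    then obtain j k where x: "x = (j, k)" "k \<in> TT (n - j) m" by auto
    then have "k \<in> {0..<m} \<rightarrow>\<^sub>E {1..n-j}" by (simp add: TT_def)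
    then show "(\<lambda>k. (k m, restrict k {0..<m})) ((\<lambda>(j, k). k(m := j)) x) = x"
      by (auto simp: x fun_eq_iff PiE_def extensional_def)
  qed
  show "\<forall>a\<in>TT n (Suc m). (\<lambda>(j, k). k(m := j)) ((\<lambda>k. (k m, restrict k {0..<m})) a) = a"
  proof
    fix k assume "k \<in> TT n (Suc m)"
    then have "k \<in> {0..<Suc m} \<rightarrow>\<^sub>E {1..n}" by (simp add: TT_def)
    then show "(\<lambda>(j, k). k(m := j)) ((\<lambda>k. (k m, restrict k {0..<m})) k) = k"
      by (auto simp: fun_eq_iff PiE_def extensional_def)
  qed
  show "(\<lambda>(j, k). k(m := j)) ` (SIGMA j:{1..n}. TT (n - j) m) \<subseteq> TT n (Suc m)"
  proof
    fix y assume "y \<in> (\<lambda>(j, k). k(m := j)) ` (SIGMA j:{1..n}. TT (n - j) m)"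
    then obtain j k where y: "y = k(m := j)" and j: "j \<in> {1..n}" and k: "k \<in> TT (n - j) m" by auto
    then have kP: "k \<in> {0..<m} \<rightarrow>\<^sub>E {1..n-j}" and ks: "(\<Sum>i<m. k i) \<le> n - j" by (auto simp: TT_def)
    have "(\<Sum>i<Suc m. (k(m := j)) i) = (\<Sum>i<m. k i) + j"
      by (simp add: lessThan_Suc sum.insert) 
    also have "\<dots> \<le> n" using ks j by auto
    finally have "(\<Sum>i<Suc m. (k(m := j)) i) \<le> n" .
    moreover have "k(m := j) \<in> {0..<Suc m} \<rightarrow>\<^sub>E {1..n}"
      using kP j by (auto simp: PiE_def Pi_def extensional_def less_Suc_eq)
    ultimately show "y \<in> TT n (Suc m)" by (simp add: TT_def y)
  qed
  show "(\<lambda>k. (k m, restrict k {0..<m})) ` TT n (Suc m) \<subseteq> (SIGMA j:{1..n}. TT (n - j) m)"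
  proof
    fix y assume "y \<in> (\<lambda>k. (k m, restrict k {0..<m})) ` TT n (Suc m)"
    then obtain k where y: "y = (k m, restrict k {0..<m})" and "k \<in> TT n (Suc m)" by auto
    then have kP: "k \<in> {0..<Suc m} \<rightarrow>\<^sub>E {1..n}" and ks: "(\<Sum>i<Suc m. k i) \<le> n" by (auto simp: TT_def)
    have ks2: "(\<Sum>i<m. k i) + k m \<le> n" using ks by (simp add: lessThan_Suc add.commute)
    have km: "k m \<in> {1..n}" using kP by auto
    have "restrict k {0..<m} \<in> {0..<m} \<rightarrow>\<^sub>E {1..n - k m}"
    proof
      fix i assume i: "i \<in> {0..<m}"
      have "k i \<le> (\<Sum>i<m. k i)" using i by (intro member_le_sum) auto
      moreover have "k i \<ge> 1" using kP i by auto
      ultimately show "restrict k {0..<m} i \<in> {1..n - k m}" using ks2 i by auto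
    qed auto
    moreover have "(\<Sum>i<m. restrict k {0..<m} i) \<le> n - k m" using ks2 by simp
    ultimately show "y \<in> (SIGMA j:{1..n}. TT (n - j) m)"
      using km by (simp add: TT_def y)
  qed
qed

lemma H_rec: "H n (Suc m) = (\<Sum>j=1..n. 1 / of_nat j * H (n - j) m)"
proof -
  have "H n (Suc m) = (\<Sum>x\<in>(SIGMA j:{1..n}. TT (n - j) m). 1 / (\<Prod>i<Suc m. of_nat (((\<lambda>(j, k). k(m := j)) x) i)))"
    unfolding H_TT by (rule sum.reindex_bij_betw[OF TT_bij, symmetric])
  also have "\<dots> = (\<Sum>(j,k)\<in>(SIGMA j:{1..n}. TT (n - j) m). 1 / of_nat j * (1 / (\<Prod>i<m. of_nat (k i))))"
    by (intro sum.cong refl) (auto simp: lessThan_Suc prod.insert)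
  also have "\<dots> = (\<Sum>j=1..n. \<Sum>k\<in>TT (n - j) m. 1 / of_nat j * (1 / (\<Prod>i<m. of_nat (k i))))"
    by (rule sum.Sigma[symmetric]) (auto simp: finite_TT)
  also have "\<dots> = (\<Sum>j=1..n. 1 / of_nat j * H (n - j) m)"
    by (simp add: H_TT sum_distrib_left)
  finally show ?thesis .
qed

lemma H_0: "H n 0 = 1"
proof -
  have "TT n 0 = {\<lambda>_. undefined}" by (auto simp: TT_def)
  then show ?thesis by (simp add: H_TT)
qed

lemma H_fps: "H n m = (LL ^ m * EE 1) $ n"
proof (induction m arbitrary: n)
  case 0 then show ?case by (simp add: H_0)
next
  case (Suc m)
  have "(LL ^ Suc m * EE 1) $ n = (LL * (LL ^ m * EE 1)) $ n" by (simp add: mult.assoc)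
  also have "\<dots> = (\<Sum>i=0..n. LL $ i * H (n - i) m)" by (simp add: fps_mult_nth Suc)
  also have "\<dots> = (\<Sum>i=1..n. LL $ i * H (n - i) m)"
    by (simp add: sum.atLeast_Suc_atMost)
  also have "\<dots> = H n (Suc m)" unfolding H_rec by (intro sum.cong refl) (simp add: LL_def)
  finally show ?case ..
qed

lemma sign_s1: "(-1) ^ i * s1 i r = (-1) ^ r * of_nat (stirling i r)"
proof (cases "r \<le> i")
  case True
  then obtain d where i: "i = r + d" using le_Suc_ex by blast
  have "(-1::complex) ^ i * (-1) ^ (i - r) = (-1) ^ r * ((-1) ^ d * (-1) ^ d)"
    by (simp add: i power_add)
  also have "\<dots> = (-1) ^ r" by (simp add: power_add[symmetric] flip: mult_2)
  finally show ?thesis by (simp add: s1_def mult.assoc[symmetric])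
qed (simp add: s1_def)

lemma mult_nth_cong: "(\<And>k. k \<le> n \<Longrightarrow> g $ k = g' $ k) \<Longrightarrow> (f * g) $ n = (f * g') $ n"
  by (simp add: fps_mult_nth)

lemma unit_unique:
  fixes x y v :: "'a::comm_ring_1"
  shows "x * v = 1 \<Longrightarrow> y * v = 1 \<Longrightarrow> x = y"
  by (metis mult.assoc mult.commute mult_1_right)

context
  fixes a b :: complex
begin

definition ww where "ww = KK a * EE b"

lemma ww0: "ww $ 0 = 0" by (simp add: ww_def)

lemma ww_pow: "ww ^ i = fps_X ^ i * (fps_const (a ^ i) * EE b ^ i)"
  by (simp add: ww_def power_mult_distrib fps_const_power algebra_simps)

lemma ww_pow_nth: "k < i \<Longrightarrow> (ww ^ i) $ k = 0"
  by (simp add: ww_pow fps_X_power_mult_nth)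

lemma EE_ww_pow_nth: "(EE b * ww ^ i) $ n = of_nat (n choose i) * a ^ i * b ^ (n - i)"
proof -
  have "EE b * ww ^ i = fps_X ^ i * (fps_const (a ^ i) * EE b ^ Suc i)"
    by (simp add: ww_pow mult_ac)
  then show ?thesis
    by (auto simp: fps_X_power_mult_nth EE_pow simp del: power_Suc)
qed

lemma compose_trunc:
  assumes "k \<le> n"
  shows "(h oo ww) $ k = (\<Sum>i=0..n. fps_const (h $ i) * ww ^ i) $ k"
proof -
  have "(h oo ww) $ k = (\<Sum>i=0..k. h $ i * (ww ^ i) $ k)" by (rule fps_compose_nth)
  also have "\<dots> = (\<Sum>i=0..n. h $ i * (ww ^ i) $ k)"
    by (rule sum.mono_neutral_left) (use assms in \<open>auto simp: ww_pow_nth\<close>)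
  finally show ?thesis by (simp add: fps_sum_nth)
qed

lemma LHS_fps: "(EE b * (h oo ww)) $ n = (\<Sum>k=0..n. of_nat (n choose k) * a ^ k * b ^ (n - k) * h $ k)"
proof -
  have "(EE b * (h oo ww)) $ n = (EE b * (\<Sum>i=0..n. fps_const (h $ i) * ww ^ i)) $ n"
    by (rule mult_nth_cong) (rule compose_trunc)
  also have "\<dots> = (\<Sum>i=0..n. h $ i * (EE b * ww ^ i) $ n)"
    by (simp add: sum_distrib_left fps_sum_nth mult.left_commute[of "EE b"])
  also have "\<dots> = (\<Sum>k=0..n. of_nat (n choose k) * a ^ k * b ^ (n - k) * h $ k)"
    by (simp add: EE_ww_pow_nth algebra_simps)
  finally show ?thesis .
qed

lemma EE1_ww: "(EE 1 oo ww) * (1 - ww) = 1"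
proof -
  have "(EE 1 oo ww) * (1 - ww) = (EE 1 * (1 - fps_X)) oo ww"
    by (simp add: fps_compose_mult_distrib[OF ww0] fps_compose_sub_distrib ww0)
  also have "EE 1 * (1 - fps_X) = 1" using EE_inv[of 1] by simp
  finally show ?thesis by simp
qed

lemma uu: "EE 1 oo ww = EE (a + b) * (1 - KK b)"
proof -
  have h1: "EE b * (1 - KK b) = 1" by (rule EE_inv)
  have h2: "EE (a + b) * (1 - KK (a + b)) = 1" by (rule EE_inv)
  have h3: "(EE 1 oo ww) * (1 - KK a * EE b) = 1" using EE1_ww by (simp add: ww_def)
  have h4: "fps_const (a + b) = fps_const a + fps_const b" by simp
  show ?thesis using h1 h2 h3 h4 by algebra
qed

lemma EE_deriv: "fps_deriv (EE c) = fps_const c * EE c ^ 2"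
proof (rule fps_ext)
  fix n
  have "(EE c ^ Suc 1) $ n = of_nat (Suc n) * c ^ n" by (subst EE_pow) simp
  then show "fps_deriv (EE c) $ n = (fps_const c * EE c ^ 2) $ n"
    by (simp add: numeral_2_eq_2 del: power_Suc) simp
qed

lemma EE_compose_K: "EE 1 oo KK c = EE c"
  by (simp add: fps_compose_linear fps_eq_iff)

lemma deriv_LL_K: "fps_deriv (LL oo KK c) = fps_const c * EE c"
  by (subst fps_compose_deriv) (simp_all add: LL_deriv EE_compose_K)

lemma LL_ww: "LL oo ww = (LL oo KK (a + b)) - (LL oo KK b)"
proof -
  have d: "fps_deriv (LL oo ww) = (EE 1 oo ww) * fps_deriv ww"
    by (simp add: fps_compose_deriv[OF ww0] LL_deriv)
  have dw: "fps_deriv ww = fps_const a * EE b + fps_const a * fps_X * (fps_const b * EE b ^ 2)"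
    by (simp add: ww_def EE_deriv algebra_simps)
  have h1: "EE b * (1 - KK b) = 1" by (rule EE_inv)
  have h2: "EE (a + b) * (1 - KK (a + b)) = 1" by (rule EE_inv)
  have h4: "fps_const (a + b) = fps_const a + fps_const b" by simp
  have "fps_deriv (LL oo ww) = fps_deriv ((LL oo KK (a + b)) - (LL oo KK b))"
    unfolding d dw uu fps_deriv_sub deriv_LL_K using h1 h2 h4 by algebra
  then show ?thesis by (subst (asm) fps_deriv_eq_iff) (simp add: ww0)
qed

lemma main_fps:
  "S n a b m = (((LL oo KK (a + b)) - (LL oo KK b)) ^ m * EE (a + b)) $ n"
proof -
  have "S n a b m = (EE b * ((LL ^ m * EE 1) oo ww)) $ n"
    unfolding LHS_fps S_def H_fps by simp
  also have "EE b * ((LL ^ m * EE 1) oo ww) = (LL oo ww) ^ m * (EE b * (EE 1 oo ww))"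
    by (simp add: fps_compose_mult_distrib[OF ww0] fps_compose_power[OF ww0] mult_ac)
  also have "EE b * (EE 1 oo ww) = EE (a + b)"
    unfolding uu using EE_inv[of b] by (simp add: mult_ac)
  finally show ?thesis by (simp add: LL_ww)
qed

lemma of_nat_nth: "(of_nat N * f) $ n = of_nat N * (f $ n :: complex)"
  by (metis fps_mult_left_const_nth fps_of_nat)

lemma neg_pow_nth: "((-1) ^ r * f) $ n = (-1) ^ r * (f $ n :: complex)"
  by (induct r) (simp_all add: mult.assoc)

lemma term_nth:
  "((LL oo KK (a + b)) ^ j * (- (LL oo KK b)) ^ r * EE (a + b)) $ n =
    (-1) ^ r * (\<Sum>k=0..n. (a + b) ^ k * H k j * (b ^ (n - k) * (LL ^ r) $ (n - k)))"
proof -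
  have eq: "(LL oo KK (a + b)) ^ j * (- (LL oo KK b)) ^ r * EE (a + b) =
        (-1) ^ r * (((LL ^ j * EE 1) oo KK (a + b)) * (LL ^ r oo KK b))"
  proof -
    have k0: "(KK c) $ 0 = 0" for c by simp
    have c1: "(LL ^ j * EE 1) oo KK (a+b) = (LL oo KK (a+b)) ^ j * EE (a+b)"
      by (simp only: fps_compose_mult_distrib[OF k0] fps_compose_power[OF k0] EE_compose_K)
    have c2: "LL ^ r oo KK b = (LL oo KK b) ^ r" by (simp only: fps_compose_power[OF k0])
    show ?thesis unfolding c1 c2 power_minus[of "LL oo KK b"] by (simp only: mult_ac)
  qed
  show ?thesis unfolding eq neg_pow_nth
    unfolding fps_mult_nth[of "(LL ^ j * EE 1) oo KK (a+b)"] compose_K[of "LL ^ j * EE 1"]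
      H_fps[symmetric] compose_K[of "LL ^ r"]
    by (simp only: sum_distrib_left)
qed

end

theorem theorem1:
  fixes a b :: complex and m n :: nat
  shows "S n a b m =
    (\<Sum>j=0..m. of_nat (m choose j) *
       (\<Sum>k=0..n. H k j * (a + b) ^ k * (fact (m - j) / fact (n - k)) *
          (-1) ^ (n - k) * b ^ (n - k) * s1 (n - k) (m - j)))"
proof -
  have "S n a b m = (((LL oo KK (a + b)) + (- (LL oo KK b))) ^ m * EE (a + b)) $ n"
    using main_fps by simp
  also have "\<dots> = (\<Sum>j=0..m. of_nat (m choose j) *
      ((LL oo KK (a + b)) ^ j * (- (LL oo KK b)) ^ (m - j) * EE (a + b)) $ n)"
    unfolding binomial_ring sum_distrib_right fps_sum_nth atLeast0AtMost
    by (intro sum.cong refl) (simp only: mult.assoc of_nat_nth)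
  also have "\<dots> = (\<Sum>j=0..m. of_nat (m choose j) *
       (\<Sum>k=0..n. H k j * (a + b) ^ k * (fact (m - j) / fact (n - k)) *
          (-1) ^ (n - k) * b ^ (n - k) * s1 (n - k) (m - j)))"
  proof (intro sum.cong refl arg_cong2[where f="(*)"])
    fix j
    have "((LL oo KK (a + b)) ^ j * (- (LL oo KK b)) ^ (m - j) * EE (a + b)) $ n =
      (\<Sum>k=0..n. (-1) ^ (m - j) * ((a + b) ^ k * H k j * (b ^ (n - k) * (LL ^ (m - j)) $ (n - k))))"
      by (simp add: term_nth sum_distrib_left)
    also have "\<dots> = (\<Sum>k=0..n. H k j * (a + b) ^ k * (fact (m - j) / fact (n - k)) *
          (-1) ^ (n - k) * b ^ (n - k) * s1 (n - k) (m - j))"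
    proof (intro sum.cong refl)
      fix k
      have sg: "(-1) ^ (n - k) * s1 (n - k) (m - j) = (-1) ^ (m - j) * of_nat (stirling (n - k) (m - j))"
        by (rule sign_s1)
      show "(-1) ^ (m - j) * ((a + b) ^ k * H k j * (b ^ (n - k) * (LL ^ (m - j)) $ (n - k))) =
        H k j * (a + b) ^ k * (fact (m - j) / fact (n - k)) * (-1) ^ (n - k) * b ^ (n - k) * s1 (n - k) (m - j)"
      proof -
        have "H k j * (a + b) ^ k * (fact (m - j) / fact (n - k)) * (-1) ^ (n - k) * b ^ (n - k) * s1 (n - k) (m - j)
          = H k j * (a + b) ^ k * (fact (m - j) / fact (n - k)) * b ^ (n - k) * ((-1) ^ (n - k) * s1 (n - k) (m - j))"
          by (simp only: mult_ac)
        also have "\<dots> = H k j * (a + b) ^ k * (fact (m - j) / fact (n - k)) * b ^ (n - k) * ((-1) ^ (m - j) * of_nat (stirling (n - k) (m - j)))"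
          by (simp only: sg)
        also have "\<dots> = (-1) ^ (m - j) * ((a + b) ^ k * H k j * (b ^ (n - k) * (LL ^ (m - j)) $ (n - k)))"
          unfolding LL_pow by (simp only: mult_ac times_divide_eq_right times_divide_eq_left)
        finally show ?thesis by simp
      qed
    qed
    finally show "((LL oo KK (a + b)) ^ j * (- (LL oo KK b)) ^ (m - j) * EE (a + b)) $ n =
      (\<Sum>k=0..n. H k j * (a + b) ^ k * (fact (m - j) / fact (n - k)) *
          (-1) ^ (n - k) * b ^ (n - k) * s1 (n - k) (m - j))" .
  qed
  finally show ?thesis .
qed

end
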